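(* Let $\mathcal{T}$ be a trim transducer. If $[\![\mathcal{T}]\!]$ is multi-sequential, then $\mathcal{T}$ satisfies the weak twinning property.
   Context: A transducer is a tuple $\mathcal{T}=(Q,E,I,F,f)$ with finite state set $Q$, initial states $I$, final states $F$, transitions $E\subseteq Q\times\Sigma\times\Gamma^*\times Q$ and final output function $f:F\to\Gamma^*$. We write $p\xrightarrow{u\mid w}q$ if there is a run from $p$ to $q$ reading $u$ and outputting $w$. $[\![\mathcal{T}]\!]=\{(u,wf(t)) : i\xrightarrow{u\mid w}t,\ i\in I,\ t\in F\}$. $\mathcal{T}$ is trim if every state lies on some run from an initial to a final state. Sequential transducer: single initial state and at most one transition per (state, input letter); sequential function: realised by a sequential transducer; multi-sequential relation: finite union of sequential functions. $\Delta(v,w)=v^{-1}w$ in the free group over $\Gamma$. $\mathcal{T}$ satisfies the weak twinning property if for all states $q_1,q_2$, all $u,v\in\Sigma^*$ and $u_1,u_2,v_1,v_2\in\Gamma^*$ with $q_1\xrightarrow{u\mid u_1}q_1$, $q_1\xrightarrow{v\mid v_1}q_1$, $q_1\xrightarrow{u\mid u_2}q_2$, $q_2\xrightarrow{v\mid v_2}q_2$, one has $\Delta(u_1,u_2)=\Delta(u_1v_1,u_2v_2)$. *)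

theory Defs
  imports Main
begin

record ('q, 'a, 'b) transducer =
  states :: "'q set"
  trans  :: "('q \<times> 'a \<times> 'b list \<times> 'q) set"
  init   :: "'q set"
  final  :: "'q set"
  fout   :: "'q \<Rightarrow> 'b list"

definition well_formed :: "('q, 'a, 'b) transducer \<Rightarrow> bool" where
  "well_formed T \<longleftrightarrow> finite (states T) \<and> finite (trans T) \<and>
     trans T \<subseteq> states T \<times> UNIV \<times> UNIV \<times> states T \<and>
     init T \<subseteq> states T \<and> final T \<subseteq> states T"

inductive run :: "('q, 'a, 'b) transducer \<Rightarrow> 'q \<Rightarrow> 'a list \<Rightarrow> 'b list \<Rightarrow> 'q \<Rightarrow> bool"
  for T where
  run_nil: "run T p [] [] p"
| run_cons: "(p, a, x, r) \<in> trans T \<Longrightarrow> run T r u w q \<Longrightarrow> run T p (a # u) (x @ w) q"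

definition rel :: "('q, 'a, 'b) transducer \<Rightarrow> ('a list \<times> 'b list) set" where
  "rel T = {(u, w @ fout T t) | u w i t. i \<in> init T \<and> t \<in> final T \<and> run T i u w t}"

definition trim :: "('q, 'a, 'b) transducer \<Rightarrow> bool" where
  "trim T \<longleftrightarrow> (\<forall>q \<in> states T. \<exists>i \<in> init T. \<exists>t \<in> final T. \<exists>u w u' w'.
       run T i u w q \<and> run T q u' w' t)"

definition sequential :: "('q, 'a, 'b) transducer \<Rightarrow> bool" where
  "sequential T \<longleftrightarrow> well_formed T \<and> (\<exists>i. init T = {i}) \<and>
     (\<forall>p a x r x' r'. (p, a, x, r) \<in> trans T \<and> (p, a, x', r') \<in> trans T \<longrightarrow> x = x' \<and> r = r')"

text \<open>A sequential function: realised by some sequential transducer (finite state set,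
  w.l.o.g. states are natural numbers).\<close>
definition sequential_function :: "('a list \<times> 'b list) set \<Rightarrow> bool" where
  "sequential_function R \<longleftrightarrow> (\<exists>T :: (nat, 'a, 'b) transducer. sequential T \<and> rel T = R)"

definition multi_sequential :: "('a list \<times> 'b list) set \<Rightarrow> bool" where
  "multi_sequential R \<longleftrightarrow> (\<exists>S. finite S \<and> (\<forall>R' \<in> S. sequential_function R') \<and> R = \<Union> S)"

text \<open>Free group over 'b: words over 'b \<times> bool (True = generator, False = its inverse),
  with free reduction computed by a stack.\<close>
fun red_push :: "'b \<times> bool \<Rightarrow> ('b \<times> bool) list \<Rightarrow> ('b \<times> bool) list" where
  "red_push x [] = [x]"
| "red_push x (y # ys) = (if fst x = fst y \<and> snd x \<noteq> snd y then ys else x # y # ys)"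

definition fg_reduce :: "('b \<times> bool) list \<Rightarrow> ('b \<times> bool) list" where
  "fg_reduce w = rev (foldl (\<lambda>st x. red_push x st) [] w)"

definition fg_inv :: "'b list \<Rightarrow> ('b \<times> bool) list" where
  "fg_inv v = map (\<lambda>c. (c, False)) (rev v)"

definition fg_of :: "'b list \<Rightarrow> ('b \<times> bool) list" where
  "fg_of w = map (\<lambda>c. (c, True)) w"

definition delay :: "'b list \<Rightarrow> 'b list \<Rightarrow> ('b \<times> bool) list" where
  "delay v w = fg_reduce (fg_inv v @ fg_of w)"

definition weak_twinning :: "('q, 'a, 'b) transducer \<Rightarrow> bool" where
  "weak_twinning T \<longleftrightarrow> (\<forall>q1 \<in> states T. \<forall>q2 \<in> states T. \<forall>u v u1 u2 v1 v2.
     run T q1 u u1 q1 \<and> run T q1 v v1 q1 \<and> run T q1 u u2 q2 \<and> run T q2 v v2 q2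
     \<longrightarrow> delay u1 u2 = delay (u1 @ v1) (u2 @ v2))"

end

theory Submission
  imports Defs
begin

fun rd :: "('b \<times> bool) list \<Rightarrow> bool" where
  "rd (x # y # ys) = ((\<not> (fst x = fst y \<and> snd x \<noteq> snd y)) \<and> rd (y # ys))"
| "rd _ = True"

lemma rd_tl: "rd (y # ys) \<Longrightarrow> rd ys"
  by (cases ys) auto

lemma rd_push: "rd st \<Longrightarrow> rd (red_push x st)"
  by (cases st) (auto dest: rd_tl)

lemma rd_foldl: "rd st \<Longrightarrow> rd (foldl (\<lambda>st x. red_push x st) st xs)"
  by (induction xs arbitrary: st) (auto simp: rd_push)

lemma push_pair: "rd st \<Longrightarrow> red_push (c, \<not> b) (red_push (c, b) st) = st"
proof (induction st rule: rd.induct)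
  case (1 x y ys)
  then show ?case by (cases x; cases y; auto)
next
  case ("2_1") then show ?case by simp
next
  case ("2_2" x) then show ?case by (cases x) auto
qed

lemma fg_pair: "fg_reduce (xs @ (c, b) # (c, \<not> b) # ys) = fg_reduce (xs @ ys)"
proof -
  have "rd (foldl (\<lambda>st x. red_push x st) [] xs)" by (rule rd_foldl) simp
  then show ?thesis unfolding fg_reduce_def by (simp add: push_pair)
qed

lemma fg_inv_app: "fg_inv (a @ b) = fg_inv b @ fg_inv a"
  by (simp add: fg_inv_def)
lemma fg_of_app: "fg_of (a @ b) = fg_of a @ fg_of b"
  by (simp add: fg_of_def)

lemma fg_cancel: "fg_reduce (xs @ fg_inv w @ fg_of w @ ys) = fg_reduce (xs @ ys)"
proof (induction w arbitrary: xs ys)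
  case Nil then show ?case by (simp add: fg_inv_def fg_of_def)
next
  case (Cons a w)
  have "xs @ fg_inv (a # w) @ fg_of (a # w) @ ys
      = (xs @ fg_inv w) @ (a, False) # (a, \<not> False) # (fg_of w @ ys)"
    by (simp add: fg_inv_def fg_of_def)
  then have "fg_reduce (xs @ fg_inv (a # w) @ fg_of (a # w) @ ys)
      = fg_reduce ((xs @ fg_inv w) @ (fg_of w @ ys))"
    by (simp only: fg_pair)
  also have "\<dots> = fg_reduce (xs @ ys)" using Cons by simp
  finally show ?case .
qed

lemma delay_caseA:
  assumes "u1 = u2 @ r" "r @ v1 = v2 @ r"
  shows "delay u1 u2 = delay (u1 @ v1) (u2 @ v2)"
proof -
  have "delay u1 u2 = fg_reduce (fg_inv r @ fg_inv u2 @ fg_of u2 @ [])"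
    using assms by (simp add: delay_def fg_inv_app)
  also have "\<dots> = fg_reduce (fg_inv r @ [])" by (rule fg_cancel)
  finally have 1: "delay u1 u2 = fg_reduce (fg_inv r)" by simp
  have "delay (u1 @ v1) (u2 @ v2) = fg_reduce (fg_inv (r @ v1) @ fg_inv u2 @ fg_of u2 @ fg_of v2)"
    using assms by (simp add: delay_def fg_inv_app fg_of_app)
  also have "\<dots> = fg_reduce (fg_inv (r @ v1) @ fg_of v2)" by (rule fg_cancel)
  also have "\<dots> = fg_reduce (fg_inv r @ fg_inv v2 @ fg_of v2 @ [])"
    using assms by (simp add: fg_inv_app)
  also have "\<dots> = fg_reduce (fg_inv r @ [])" by (rule fg_cancel)
  finally show ?thesis using 1 by simp
qed

lemma delay_caseB:
  assumes "u2 = u1 @ r" "v1 @ r = r @ v2"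
  shows "delay u1 u2 = delay (u1 @ v1) (u2 @ v2)"
proof -
  have "delay u1 u2 = fg_reduce ([] @ fg_inv u1 @ fg_of u1 @ fg_of r)"
    using assms by (simp add: delay_def fg_of_app)
  also have "\<dots> = fg_reduce ([] @ fg_of r)" by (rule fg_cancel)
  finally have 1: "delay u1 u2 = fg_reduce (fg_of r)" by simp
  have "delay (u1 @ v1) (u2 @ v2) = fg_reduce (fg_inv v1 @ fg_inv u1 @ fg_of u1 @ fg_of (r @ v2))"
    using assms by (simp add: delay_def fg_inv_app fg_of_app)
  also have "\<dots> = fg_reduce (fg_inv v1 @ fg_of (r @ v2))" by (rule fg_cancel)
  also have "\<dots> = fg_reduce ([] @ fg_inv v1 @ fg_of v1 @ fg_of r)"
    by (simp add: fg_of_app flip: assms(2))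
  also have "\<dots> = fg_reduce ([] @ fg_of r)" by (rule fg_cancel)
  finally show ?thesis using 1 by simp
qed

definition pw :: "'b list \<Rightarrow> nat \<Rightarrow> 'b list" where
  "pw w n = concat (replicate n w)"

lemma pw_len[simp]: "length (pw w n) = n * length w"
  by (simp add: pw_def length_concat sum_list_replicate)

lemma pw_Suc: "pw w (Suc n) = w @ pw w n" by (simp add: pw_def)
lemma pw_Suc2: "pw w (Suc n) = pw w n @ w"
  by (induction n) (simp_all add: pw_def)

lemma take_eq_mono: "k \<le> K \<Longrightarrow> take K xs = take K ys \<Longrightarrow> take k xs = take k ys"
  by (metis min_absorb1 take_take)

lemma final_A:
  fixes u1 u2 v1 v2 :: "'b list"
  assumes l: "length v1 = length v2" "length v1 > 0"
    and n: "n \<ge> Dc + length u1 + length u2 + length v1 + 2"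
    and T: "length u2 \<le> length u1"
    and eq: "take (min (length u1) (length u2) + n * length v1 - Dc) (u1 @ pw v1 n)
           = take (min (length u1) (length u2) + n * length v1 - Dc) (u2 @ pw v2 n)"
  shows "\<exists>r. u1 = u2 @ r \<and> r @ v1 = v2 @ r"
proof -
  let ?l = "length v1"
  obtain m where m: "n = Suc m" using n by (cases n) auto
  have "?l \<ge> 1" using l by (simp add: Suc_leI)
  then have nl: "n * ?l \<ge> n" by (metis mult.right_neutral mult_le_mono2)
  define d where "d = length u1 - length u2"
  have k: "length u1 + ?l \<le> min (length u1) (length u2) + n * ?l - Dc"
  proof -
    have mn: "min (length u1) (length u2) = length u2" using T by simp
    show ?thesis unfolding mn using nl n by linarith
  qed
  have "take (length u1 + ?l) (u1 @ pw v1 n) = take (length u1 + ?l) (u2 @ pw v2 n)"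
    using take_eq_mono[OF k eq] .
  moreover have "take (length u1 + ?l) (u1 @ pw v1 n) = u1 @ v1"
    by (simp add: m pw_Suc)
  moreover have "take (length u1 + ?l) (u2 @ pw v2 n) = u2 @ take (d + ?l) (pw v2 n)"
    using T d_def by simp
  ultimately have e: "u1 @ v1 = u2 @ take (d + ?l) (pw v2 n)" by simp
  define r where "r = take d (pw v2 n)"
  define X where "X = take (d + ?l) (pw v2 n)"
  have e': "u1 @ v1 = u2 @ X" using e unfolding X_def .
  have "take (length u1) (u1 @ v1) = take (length u1) (u2 @ X)"
    using e' by simp
  then have u1: "u1 = u2 @ r" using T d_def r_def X_def by simp
  have "drop (length u1) (u1 @ v1) = drop (length u1) (u2 @ X)"
    using e' by simp
  then have v1: "v1 = drop d X" using T d_def by simp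
  have rX: "r = take d X" unfolding r_def X_def by simp
  have rv1: "r @ v1 = X" unfolding rX using v1 by simp
  have dm: "d \<le> m * length v2"
  proof -
    have "d \<le> length u1" using d_def by simp
    also have "\<dots> \<le> m" using n m by simp
    also have "\<dots> \<le> m * length v2" using l by (cases v2) auto
    finally show ?thesis .
  qed
  have "take d (pw v2 m) = take d (pw v2 n)"
    unfolding m pw_Suc2 using dm by simp
  then have "X = v2 @ r"
    unfolding r_def X_def using l by (simp add: m pw_Suc)
  with u1 rv1 show ?thesis by auto
qed

lemma final_words:
  fixes u1 u2 v1 v2 :: "'b list"
  assumes l: "length v1 = length v2" "length v1 > 0"
    and n: "n \<ge> Dc + length u1 + length u2 + length v1 + 2"
    and eq: "take (min (length u1) (length u2) + n * length v1 - Dc) (u1 @ pw v1 n)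
           = take (min (length u1) (length u2) + n * length v1 - Dc) (u2 @ pw v2 n)"
  shows "delay u1 u2 = delay (u1 @ v1) (u2 @ v2)"
proof (cases "length u2 \<le> length u1")
  case True
  then show ?thesis using final_A[OF l n True eq] delay_caseA by blast
next
  case False
  have l': "length v2 = length v1" "length v2 > 0" using l by auto
  have n': "n \<ge> Dc + length u2 + length u1 + length v2 + 2" using n l by simp
  have eq': "take (min (length u2) (length u1) + n * length v2 - Dc) (u2 @ pw v2 n)
           = take (min (length u2) (length u1) + n * length v2 - Dc) (u1 @ pw v1 n)"
    using eq l by (simp add: min.commute)
  obtain r where "u2 = u1 @ r" "r @ v2 = v1 @ r"
    using final_A[OF l' n' _ eq'] False by auto
  then show ?thesis using delay_caseB by metis
qed

lemma run_append: "run T p w1 o1 m \<Longrightarrow> run T m w2 o2 q \<Longrightarrow> run T p (w1 @ w2) (o1 @ o2) q"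
  by (induction rule: run.induct) (auto intro: run.intros)

lemma run_split: "run T p (w1 @ w2) ou q \<Longrightarrow> \<exists>o1 o2 m. ou = o1 @ o2 \<and> run T p w1 o1 m \<and> run T m w2 o2 q"
proof (induction w1 arbitrary: p ou)
  case Nil then show ?case by (auto intro: run.intros)
next
  case (Cons a w1)
  from Cons.prems obtain x r w where tr: "(p, a, x, r) \<in> trans T" and rr: "run T r (w1 @ w2) w q"
    and ou: "ou = x @ w" by (auto elim: run.cases)
  from Cons.IH[OF rr] obtain o1 o2 m where "w = o1 @ o2" "run T r w1 o1 m" "run T m w2 o2 q" by blast
  then have "run T p (a # w1) (x @ o1) m" "ou = (x @ o1) @ o2" "run T m w2 o2 q"
    using tr ou by (auto intro: run.run_cons)
  then show ?case by blast
qed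

lemma run_pw: "run T q w ou q \<Longrightarrow> run T q (pw w n) (pw ou n) q"
  by (induction n) (auto simp: pw_Suc pw_def intro: run.intros run_append)

lemma run_det:
  assumes "sequential D"
  shows "run D p w ou q \<Longrightarrow> run D p w ou' q' \<Longrightarrow> ou = ou' \<and> q = q'"
proof (induction arbitrary: ou' q' rule: run.induct)
  case (run_nil p) then show ?case by (auto elim: run.cases)
next
  case (run_cons p a x r u w q)
  from run_cons.prems obtain x' r' w' where "(p, a, x', r') \<in> trans D" "run D r' u w' q'" "ou' = x' @ w'"
    by (auto elim: run.cases)
  moreover have "x = x' \<and> r = r'" using assms run_cons.hyps(1) calculation(1)
    unfolding sequential_def by blast
  ultimately show ?case using run_cons.IH by blast
qed

lemma run_len:
  assumes "\<forall>(p, a, x, r) \<in> trans D. length x \<le> C"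
  shows "run D p w ou q \<Longrightarrow> length ou \<le> C * length w"
  by (induction rule: run.induct) (use assms in fastforce)+

definition outC :: "('q, 'a, 'b) transducer \<Rightarrow> nat" where
  "outC D = Max (insert 0 ((\<lambda>(p, a, x, r). length x) ` trans D \<union> (\<lambda>t. length (fout D t)) ` final D))"

lemma outC_bounds:
  assumes "well_formed D"
  shows "\<forall>(p, a, x, r) \<in> trans D. length x \<le> outC D" "\<And>t. t \<in> final D \<Longrightarrow> length (fout D t) \<le> outC D"
proof -
  have fin: "finite (insert 0 ((\<lambda>(p, a, x, r). length x) ` trans D \<union> (\<lambda>t. length (fout D t)) ` final D))"
    using assms unfolding well_formed_def by (auto intro: finite_subset)
  show "\<forall>(p, a, x, r) \<in> trans D. length x \<le> outC D"
    unfolding outC_def using Max_ge[OF fin] by fastforce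
  show "\<And>t. t \<in> final D \<Longrightarrow> length (fout D t) \<le> outC D"
    unfolding outC_def using Max_ge[OF fin] by fastforce
qed

lemma seq_common:
  assumes D: "sequential D"
    and r1: "(p @ s1, O1) \<in> rel D" and r2: "(p @ s2, O2) \<in> rel D"
  shows "\<exists>ou r1 r2. O1 = ou @ r1 \<and> O2 = ou @ r2 \<and> length r1 \<le> outC D * (length s1 + 1)
           \<and> length r2 \<le> outC D * (length s2 + 1)"
proof -
  have wf: "well_formed D" using D unfolding sequential_def by simp
  obtain i0 where i0: "init D = {i0}" using D unfolding sequential_def by blast
  obtain w1 t1 where a1: "t1 \<in> final D" "run D i0 (p @ s1) w1 t1" "O1 = w1 @ fout D t1"
    using r1 i0 unfolding rel_def by auto
  obtain w2 t2 where a2: "t2 \<in> final D" "run D i0 (p @ s2) w2 t2" "O2 = w2 @ fout D t2"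
    using r2 i0 unfolding rel_def by auto
  obtain o1 o1' m1 where b1: "w1 = o1 @ o1'" "run D i0 p o1 m1" "run D m1 s1 o1' t1"
    using run_split[OF a1(2)] by blast
  obtain o2 o2' m2 where b2: "w2 = o2 @ o2'" "run D i0 p o2 m2" "run D m2 s2 o2' t2"
    using run_split[OF a2(2)] by blast
  have eq: "o1 = o2 \<and> m1 = m2" using run_det[OF D b1(2) b2(2)] .
  have l1: "length o1' \<le> outC D * length s1" using run_len[OF outC_bounds(1)[OF wf] b1(3)] .
  have l2: "length o2' \<le> outC D * length s2" using run_len[OF outC_bounds(1)[OF wf] b2(3)] .
  have f1: "length (fout D t1) \<le> outC D" using outC_bounds(2)[OF wf a1(1)] .
  have f2: "length (fout D t2) \<le> outC D" using outC_bounds(2)[OF wf a2(1)] .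
  show ?thesis
    apply (rule exI[of _ o1], rule exI[of _ "o1' @ fout D t1"], rule exI[of _ "o2' @ fout D t2"])
    using a1(3) a2(3) b1(1) b2(1) eq l1 l2 f1 f2 by (simp add: algebra_simps)
qed

definition inp :: "'b list \<Rightarrow> 'b list \<Rightarrow> (nat \<Rightarrow> nat) \<Rightarrow> nat list \<Rightarrow> 'b list" where
  "inp u v f js = concat (map (\<lambda>j. u @ pw v (f j)) js)"

lemma inp_simps[simp]: "inp u v f [] = []" "inp u v f (j # js) = u @ pw v (f j) @ inp u v f js"
  "inp u v f (js @ ks) = inp u v f js @ inp u v f ks"
  by (auto simp: inp_def)

lemma run_inp: "run T q u u1 q \<Longrightarrow> run T q v v1 q \<Longrightarrow> run T q (inp u v f js) (inp u1 v1 f js) q"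
  by (induction js) (auto intro: run.intros run_append run_pw)

lemma len_concat_bound: "(\<forall>j\<in>set js. length (g j) \<le> B) \<Longrightarrow> length (concat (map g js)) \<le> length js * B"
  by (induction js) auto

lemma len_inp: "(\<forall>j\<in>set js. f j \<le> b) \<Longrightarrow> length (inp u v f js) \<le> length js * (length u + b * length v)"
  unfolding inp_def
  by (rule len_concat_bound) (auto intro: mult_le_mono1)

lemma prefix_agree:
  assumes "A @ X = ou @ r1" "A @ Y = ou @ r2" "length r1 \<le> length X"
  shows "take (length X - length r1) X = take (length X - length r1) Y"
proof -
  let ?k = "length X - length r1"
  have lo: "length ou = length A + ?k" using arg_cong[OF assms(1), of length] assms(3) by simp
  have "take (length A + ?k) (A @ X) = ou" using assms(1) lo by simp
  moreover have "take (length A + ?k) (A @ Y) = ou" using assms(2) lo by simp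
  ultimately have "A @ take ?k X = A @ take ?k Y" by simp
  then show ?thesis by (rule same_append_eq[THEN iffD1])
qed

lemma upt_split3: "i < i' \<Longrightarrow> [0..<i'] = [0..<i] @ i # [Suc i..<i']"
  by (metis le_add1 less_imp_le_nat upt_add_eq_append upt_conv_Cons add_0 le_add_diff_inverse)

lemma funpow_mono_count: "(\<And>b::nat. F b \<ge> b) \<Longrightarrow> a \<le> c \<Longrightarrow> (F ^^ a) M \<le> (F ^^ c) M"
proof (induction c)
  case 0 then show ?case by simp
next
  case (Suc c)
  show ?case
  proof (cases "a = Suc c")
    case False
    then have "(F ^^ a) M \<le> (F ^^ c) M" using Suc by simp
    also have "\<dots> \<le> F ((F ^^ c) M)" using Suc.prems(1) .
    finally show ?thesis by simp
  qed simp
qed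

lemma key:
  fixes T :: "('q, 'a, 'b) transducer" and S :: "('a list \<times> 'b list) set set"
  assumes S: "finite S" "\<forall>R\<in>S. sequential_function R" "rel T = \<Union>S"
    and xr: "i0 \<in> init T" "run T i0 x \<alpha> q1" and yr: "t \<in> final T" "run T q2 y \<beta> t"
    and H: "run T q1 u u1 q1" "run T q1 v v1 q1" "run T q1 u u2 q2" "run T q2 v v2 q2"
  shows "\<exists>Dc. \<forall>M. \<exists>n \<ge> M. length v1 = length v2 \<and> (length v1 > 0 \<longrightarrow>
     take (min (length u1) (length u2) + n * length v1 - Dc) (u1 @ pw v1 n)
   = take (min (length u1) (length u2) + n * length v1 - Dc) (u2 @ pw v2 n))"
proof -
  define Dof :: "('a list \<times> 'b list) set \<Rightarrow> (nat, 'a, 'b) transducer"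
    where "Dof R = (SOME D. sequential D \<and> rel D = R)" for R
  have Dof: "sequential (Dof R) \<and> rel (Dof R) = R" if "R \<in> S" for R
  proof -
    have "\<exists>D :: (nat, 'a, 'b) transducer. sequential D \<and> rel D = R"
      using S(2) that unfolding sequential_function_def by blast
    then show ?thesis unfolding Dof_def by (rule someI_ex)
  qed
  define Cm where "Cm = Max (insert 0 ((\<lambda>R. outC (Dof R)) ` S))"
  have Cb: "outC (Dof R) \<le> Cm" if "R \<in> S" for R
    unfolding Cm_def using S(1) that by (intro Max_ge) auto
  define \<gamma> where "\<gamma> = \<beta> @ fout T t"
  define K where "K = card S"
  define \<Lambda> where "\<Lambda> = length u + length v + length u1 + length v1 + length u2 + length v2
     + length y + length \<gamma>"
  define G where "G b = (K + 2) * (1 + b) * \<Lambda>" for b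
  define F where "F b = b + 1 + 2 * \<Lambda> + G b + Cm * (\<Lambda> + 1) + Cm * (G b + 1)" for b
  have Ff: "F c \<ge> c" for c unfolding F_def by simp
  show ?thesis
  proof (rule exI[of _ "Cm * (\<Lambda> + 1)"], intro allI)
    fix M
    define f where "f j = (F ^^ (K - j)) M" for j
    define W where "W j = x @ inp u v f [0..<j] @ u @ pw v (f j) @ y" for j
    define Ou where "Ou j = \<alpha> @ inp u1 v1 f [0..<j] @ u2 @ pw v2 (f j) @ \<gamma>" for j
    have WO: "(W j, Ou j) \<in> rel T" for j
    proof -
      have r1: "run T q1 (inp u v f [0..<j]) (inp u1 v1 f [0..<j]) q1"
        using run_inp[OF H(1,2)] .
      have r2: "run T q2 (pw v (f j)) (pw v2 (f j)) q2" using run_pw[OF H(4)] .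
      have "run T i0 (W j) (\<alpha> @ inp u1 v1 f [0..<j] @ u2 @ pw v2 (f j) @ \<beta>) t"
        unfolding W_def
        by (intro run_append[OF xr(2)] run_append[OF r1] run_append[OF H(3)] run_append[OF r2] yr(2))
      moreover have "Ou j = (\<alpha> @ inp u1 v1 f [0..<j] @ u2 @ pw v2 (f j) @ \<beta>) @ fout T t"
        unfolding Ou_def \<gamma>_def by simp
      ultimately show ?thesis unfolding rel_def using xr(1) yr(1) by blast
    qed
    define h where "h j = (SOME R. R \<in> S \<and> (W j, Ou j) \<in> R)" for j
    have h: "h j \<in> S \<and> (W j, Ou j) \<in> h j" for j
    proof -
      have "\<exists>R. R \<in> S \<and> (W j, Ou j) \<in> R" using WO S(3) by auto
      then show ?thesis unfolding h_def by (rule someI_ex)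
    qed
    have ninj: "\<not> inj_on h {0..K}"
    proof
      assume "inj_on h {0..K}"
      moreover have "h ` {0..K} \<subseteq> S" using h by auto
      ultimately have "card {0..K} \<le> card S" using card_inj_on_le S(1) by blast
      then show False unfolding K_def by simp
    qed
    obtain i i' where ii: "i < i'" "i' \<le> K" "h i = h i'"
    proof -
      obtain j1 j2 where "j1 \<in> {0..K}" "j2 \<in> {0..K}" "j1 \<noteq> j2" "h j1 = h j2"
        using ninj unfolding inj_on_def by blast
      then show ?thesis using that by (cases "j1 < j2") (auto, metis linorder_neqE_nat)
    qed
    define D where "D = Dof (h i)"
    have D: "sequential D" "(W i, Ou i) \<in> rel D" "(W i', Ou i') \<in> rel D" "outC D \<le> Cm"
      using Dof[OF conjunct1[OF h[of i]]] h[of i] h[of i'] ii(3) Cb[OF conjunct1[OF h[of i]]]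
      unfolding D_def by auto
    define b where "b = f (Suc i)"
    define n where "n = f i"
    have fn: "n = F b"
    proof -
      have "K - i = Suc (K - Suc i)" using ii by simp
      then show ?thesis unfolding n_def b_def f_def by simp
    qed
    have fle: "f j \<le> b" if "Suc i \<le> j" "j \<le> K" for j
      unfolding f_def b_def by (rule funpow_mono_count[OF Ff]) (use that in simp)
    have bM: "b \<ge> M"
      using funpow_mono_count[OF Ff, of 0 "K - Suc i" M] unfolding b_def f_def by simp
    have nM: "n \<ge> M" using bM Ff[of b] fn by simp
    define p where "p = x @ inp u v f [0..<i] @ u @ pw v n"
    define s2 where "s2 = inp u v f [Suc i..<i'] @ u @ pw v (f i') @ y"
    have Wi: "W i = p @ y" unfolding W_def p_def n_def by simp
    have Wi': "W i' = p @ s2" unfolding W_def p_def n_def s2_def upt_split3[OF ii(1)] by simp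
    define A where "A = \<alpha> @ inp u1 v1 f [0..<i]"
    define E where "E = inp u1 v1 f [Suc i..<i'] @ u2 @ pw v2 (f i') @ \<gamma>"
    define X where "X = u2 @ pw v2 n @ \<gamma>"
    define Y where "Y = u1 @ pw v1 n @ E"
    have Oi: "Ou i = A @ X" unfolding Ou_def A_def X_def n_def by simp
    have Oi': "Ou i' = A @ Y" unfolding Ou_def A_def Y_def E_def n_def upt_split3[OF ii(1)] by simp
    obtain ou r1 r2 where R: "A @ X = ou @ r1" "A @ Y = ou @ r2"
      "length r1 \<le> outC D * (length y + 1)" "length r2 \<le> outC D * (length s2 + 1)"
      using seq_common[OF D(1), of p y "Ou i" s2 "Ou i'"] D(2,3) Wi Wi' Oi Oi' by auto
    have "outC D * (length y + 1) \<le> Cm * (\<Lambda> + 1)"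
      using D(4) by (intro mult_le_mono) (auto simp: \<Lambda>_def)
    then have r1b: "length r1 \<le> Cm * (\<Lambda> + 1)" using R(3) by linarith
    have fset: "\<forall>j\<in>set [Suc i..<i']. f j \<le> b" using fle ii by auto
    have bnd: "length (inp u' v' f [Suc i..<i']) \<le> K * ((1 + b) * \<Lambda>)"
      if "length u' \<le> \<Lambda>" "length v' \<le> \<Lambda>" for u' v' :: "'z list"
    proof -
      have "length (inp u' v' f [Suc i..<i']) \<le> length [Suc i..<i'] * (length u' + b * length v')"
        using len_inp[OF fset] .
      also have "\<dots> \<le> K * ((1 + b) * \<Lambda>)"
      proof (rule mult_le_mono)
        show "length [Suc i..<i'] \<le> K" using ii by simp
        have "b * length v' \<le> b * \<Lambda>" using that by simp
        moreover have "(1 + b) * \<Lambda> = \<Lambda> + b * \<Lambda>" by (simp add: algebra_simps)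
        ultimately show "length u' + b * length v' \<le> (1 + b) * \<Lambda>" using that by linarith
      qed
      finally show ?thesis .
    qed
    have fi': "f i' \<le> b" using fle ii by simp
    have Gexp: "G b = K * ((1 + b) * \<Lambda>) + \<Lambda> + b * \<Lambda> + \<Lambda> + b * \<Lambda>"
      unfolding G_def by (simp add: algebra_simps)
    have s2b: "length s2 \<le> G b"
    proof -
      have "f i' * length v \<le> b * \<Lambda>" using fi' by (intro mult_le_mono) (auto simp: \<Lambda>_def)
      moreover have "length (inp u v f [Suc i..<i']) \<le> K * ((1 + b) * \<Lambda>)"
        by (rule bnd) (auto simp: \<Lambda>_def)
      ultimately show ?thesis unfolding s2_def Gexp by (simp add: \<Lambda>_def)
    qed
    have Eb: "length E \<le> G b"
    proof -
      have "f i' * length v2 \<le> b * \<Lambda>" using fi' by (intro mult_le_mono) (auto simp: \<Lambda>_def)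
      moreover have "length (inp u1 v1 f [Suc i..<i']) \<le> K * ((1 + b) * \<Lambda>)"
        by (rule bnd) (auto simp: \<Lambda>_def)
      ultimately show ?thesis unfolding E_def Gexp by (simp add: \<Lambda>_def)
    qed
    have "outC D * (length s2 + 1) \<le> Cm * (G b + 1)"
      using D(4) s2b by (intro mult_le_mono) auto
    then have r2b: "length r2 \<le> Cm * (G b + 1)" using R(4) by linarith
    have leq: "length X + length r2 = length Y + length r1"
      using arg_cong[OF R(1), of length] arg_cong[OF R(2), of length] by simp
    have lX: "length X = length u2 + n * length v2 + length \<gamma>" unfolding X_def by simp
    have lY: "length Y = length u1 + n * length v1 + length E" unfolding Y_def by simp
    have nF: "n = b + 1 + 2 * \<Lambda> + G b + Cm * (\<Lambda> + 1) + Cm * (G b + 1)"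
      using fn unfolding F_def by simp
    have lu: "length u1 \<le> \<Lambda>" "length u2 \<le> \<Lambda>" "length \<gamma> \<le> \<Lambda>" unfolding \<Lambda>_def by auto
    have lv: "length v1 = length v2"
    proof (rule ccontr)
      assume ne: "length v1 \<noteq> length v2"
      show False
      proof (cases "length v1 < length v2")
        case True
        then have "n * length v1 + n \<le> n * length v2"
          using mult_le_mono2[OF Suc_leI[OF True], of n] by simp
        then show False using leq lX lY r1b Eb nF lu by linarith
      next
        case False
        then have "length v2 < length v1" using ne by simp
        then have "n * length v2 + n \<le> n * length v1"
          using mult_le_mono2[OF Suc_leI, of "length v2" "length v1" n] by simp
        then show False using leq lX lY r2b nF lu by linarith
      qed
    qed
    show "\<exists>n' \<ge> M. length v1 = length v2 \<and> (length v1 > 0 \<longrightarrow>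
     take (min (length u1) (length u2) + n' * length v1 - Cm * (\<Lambda> + 1)) (u1 @ pw v1 n')
   = take (min (length u1) (length u2) + n' * length v1 - Cm * (\<Lambda> + 1)) (u2 @ pw v2 n'))"
    proof (intro exI[of _ n] conjI impI)
      show "n \<ge> M" by (rule nM)
      show "length v1 = length v2" by (rule lv)
      assume pos: "length v1 > 0"
      let ?k' = "min (length u1) (length u2) + n * length v1 - Cm * (\<Lambda> + 1)"
      have "n * length v1 \<ge> n" using mult_le_mono2[OF Suc_leI[OF pos], of n] by simp
      then have rX: "length r1 \<le> length X" using lX r1b nF lv by simp
      have ag: "take (length X - length r1) X = take (length X - length r1) Y"
        by (rule prefix_agree[OF R(1,2) rX])
      have k1: "?k' \<le> length X - length r1" using lX lv r1b by simp
      have ag2: "take ?k' X = take ?k' Y" by (rule take_eq_mono[OF k1 ag])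
      have "take ?k' X = take ?k' (u2 @ pw v2 n)"
        unfolding X_def using lv by (simp add: take_append min_def)
      moreover have "take ?k' Y = take ?k' (u1 @ pw v1 n)"
        unfolding Y_def by (simp add: take_append min_def)
      ultimately show "take ?k' (u1 @ pw v1 n) = take ?k' (u2 @ pw v2 n)" using ag2 by simp
    qed
  qed
qed

theorem lemma3:
  fixes T :: "('q, 'a, 'b) transducer"
  assumes "well_formed T"
    and "trim T"
    and "multi_sequential (rel T)"
  shows "weak_twinning T"
  unfolding weak_twinning_def
proof (intro ballI allI impI)
  fix q1 q2 u v u1 u2 v1 v2
  assume q1: "q1 \<in> states T" and q2: "q2 \<in> states T"
    and H: "run T q1 u u1 q1 \<and> run T q1 v v1 q1 \<and> run T q1 u u2 q2 \<and> run T q2 v v2 q2"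
  obtain i0 x \<alpha> where xr: "i0 \<in> init T" "run T i0 x \<alpha> q1"
    using assms(2) q1 unfolding trim_def by blast
  obtain t y \<beta> where yr: "t \<in> final T" "run T q2 y \<beta> t"
    using assms(2) q2 unfolding trim_def by blast
  obtain S where S: "finite S" "\<forall>R\<in>S. sequential_function R" "rel T = \<Union>S"
    using assms(3) unfolding multi_sequential_def by blast
  obtain Dc where K: "\<forall>M. \<exists>n \<ge> M. length v1 = length v2 \<and> (length v1 > 0 \<longrightarrow>
     take (min (length u1) (length u2) + n * length v1 - Dc) (u1 @ pw v1 n)
   = take (min (length u1) (length u2) + n * length v1 - Dc) (u2 @ pw v2 n))"
    using key[OF S xr yr] H by blast
  obtain n where n: "n \<ge> Dc + length u1 + length u2 + length v1 + 2" "length v1 = length v2"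
    "length v1 > 0 \<longrightarrow>
     take (min (length u1) (length u2) + n * length v1 - Dc) (u1 @ pw v1 n)
   = take (min (length u1) (length u2) + n * length v1 - Dc) (u2 @ pw v2 n)"
    using K by blast
  show "delay u1 u2 = delay (u1 @ v1) (u2 @ v2)"
  proof (cases "length v1 > 0")
    case True
    then show ?thesis using final_words[OF n(2) True n(1)] n(3) by blast
  next
    case False
    then show ?thesis using n(2) by simp
  qed
qed

end
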